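(* Let $P=(I,J,\emptyset)$ be a reduced presentation. Then for every $j\in J$, $\mathbf{\L}_{j,1}$ is embeddable in $\mathbf B_\Delta$.
   Context: Wajsberg hoops: basic hoops satisfying $(x\to y)\to y\approx(y\to x)\to x$. $\Gamma(\mathbf G,u)$ is the Wajsberg hoop on $[0,u]$ with $ab=\max\{a+b-u,0\}$, $a\to b=\min\{u-a+b,u\}$; $\mathbf{\L}_n=\Gamma(\mathbb Z,n)$ (elements $0,\dots,n$), $\mathbf{\L}_{n,k}=\Gamma(\mathbb Z\times_l\mathbb Z,(n,k))$ (pairs $(r,s)$, lexicographic order), $\mathbf{\L}_n^\infty=\mathbf{\L}_{n,0}$. In a bounded Wajsberg hoop, $\neg a=a\to0$. $X{\downarrow}$ = set of divisors of elements of $X$. A presentation $(I,J,\emptyset)$ ($I,J$ finite subsets of $\mathbb N\setminus\{0\}$) is reduced if $I\cup J\ne\emptyset$, no $m\in I$ divides any element of $(I\setminus\{m\})\cup J$, and no $n\in J$ divides any element of $J\setminus\{n\}$. Generators: for $k\ge2$, $0\le h<k$, $\gcd(k,h)=1$, $g_{k,h}$ is the unique element $a\in\mathbf{\L}_{k,h}$ with $a\le\neg a$ generating $\mathbf{\L}_{k,h}$; $g_{1,0}=(0,1)\in\mathbf{\L}_{1,0}$. Construction: $\Delta=\{(k,h,2):0\le h<k\in I{\downarrow},\gcd(k,h)=1\}\cup\{(k,h,i):i\in\{0,1\},0\le h<k\in J{\downarrow},\gcd(k,h)=1\}$; $\mathbf A^0_{k,h}=\mathbf A^1_{k,h}=\mathbf{\L}_{k,h}$,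 $\mathbf A^2_{k,h}=\mathbf{\L}_k$; $\mathbf A_\Delta=\prod_{(k,h,i)\in\Delta}\mathbf A^i_{k,h}$; $\bar g(k,h,0)=g_{k,h}$, $\bar g(k,h,1)=\neg g_{k,h}$, $\bar g(k,h,2)=h\in\mathbf{\L}_k$; $\mathbf B_\Delta$ is the subalgebra of $\mathbf A_\Delta$ generated by $\bar g$. *)

theory Defs
  imports Main "HOL-Library.Product_Lexorder" "HOL-Library.Product_Plus"
begin

text \<open>Elements of the lexicographically ordered group Z x_l Z are pairs of integers;
  the order on pairs is the lexicographic one (Product_Lexorder), addition is
  componentwise (Product_Plus).  The group Z is represented inside Z x_l Z as
  the pairs (r,0) (an ordered-group embedding), so Gamma(Z,n) is realised on
  the pairs (r,0), 0 <= r <= n, with unit (n,0).\<close>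

type_synonym elt = "int \<times> int"

record 'a halg =
  hcarrier :: "'a set"
  hmult :: "'a \<Rightarrow> 'a \<Rightarrow> 'a"
  himp :: "'a \<Rightarrow> 'a \<Rightarrow> 'a"
  hone :: 'a

definition gmult :: "elt \<Rightarrow> elt \<Rightarrow> elt \<Rightarrow> elt" where
  "gmult u a b = max (a + b - u) 0"

definition gimp :: "elt \<Rightarrow> elt \<Rightarrow> elt \<Rightarrow> elt" where
  "gimp u a b = min (u - a + b) u"

definition Luk_pair :: "nat \<Rightarrow> nat \<Rightarrow> elt halg" where
  "Luk_pair n k = \<lparr> hcarrier = {a. 0 \<le> a \<and> a \<le> (int n, int k)},
      hmult = gmult (int n, int k), himp = gimp (int n, int k), hone = (int n, int k) \<rparr>"

definition Luk :: "nat \<Rightarrow> elt halg" where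
  "Luk n = \<lparr> hcarrier = {(int r, 0) | r. r \<le> n},
      hmult = gmult (int n, 0), himp = gimp (int n, 0), hone = (int n, 0) \<rparr>"

inductive_set gen :: "'a halg \<Rightarrow> 'a set \<Rightarrow> 'a set" for A :: "'a halg" and X :: "'a set" where
  gen_base: "x \<in> X \<Longrightarrow> x \<in> gen A X"
| gen_one: "hone A \<in> gen A X"
| gen_mult: "a \<in> gen A X \<Longrightarrow> b \<in> gen A X \<Longrightarrow> hmult A a b \<in> gen A X"
| gen_imp: "a \<in> gen A X \<Longrightarrow> b \<in> gen A X \<Longrightarrow> himp A a b \<in> gen A X"

definition lneg :: "nat \<Rightarrow> nat \<Rightarrow> elt \<Rightarrow> elt" where
  "lneg k h a = himp (Luk_pair k h) a 0"

definition gen_el :: "nat \<Rightarrow> nat \<Rightarrow> elt" where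
  "gen_el k h = (if k = 1 then (0, 1) else
     (THE a. a \<in> hcarrier (Luk_pair k h) \<and> a \<le> lneg k h a
             \<and> gen (Luk_pair k h) {a} = hcarrier (Luk_pair k h)))"

definition divisors_of :: "nat set \<Rightarrow> nat set" where
  "divisors_of X = {k. \<exists>m\<in>X. k dvd m}"

definition reduced :: "nat set \<Rightarrow> nat set \<Rightarrow> bool" where
  "reduced I J \<longleftrightarrow> I \<union> J \<noteq> {}
     \<and> (\<forall>m\<in>I. \<forall>x\<in>(I - {m}) \<union> J. \<not> m dvd x)
     \<and> (\<forall>n\<in>J. \<forall>x\<in>J - {n}. \<not> n dvd x)"

definition Delta :: "nat set \<Rightarrow> nat set \<Rightarrow> (nat \<times> nat \<times> nat) set" where
  "Delta I J = {(k, h, 2) | k h. h < k \<and> k \<in> divisors_of I \<and> coprime k h}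
             \<union> {(k, h, i) | k h i. i \<in> {0, 1} \<and> h < k \<and> k \<in> divisors_of J \<and> coprime k h}"

definition comp_alg :: "nat \<times> nat \<times> nat \<Rightarrow> elt halg" where
  "comp_alg d = (case d of (k, h, i) \<Rightarrow> if i = 2 then Luk k else Luk_pair k h)"

definition gbar :: "nat \<times> nat \<times> nat \<Rightarrow> elt" where
  "gbar d = (case d of (k, h, i) \<Rightarrow>
      if i = 0 then gen_el k h else if i = 1 then lneg k h (gen_el k h) else (int h, 0))"

definition prod_alg :: "(nat \<times> nat \<times> nat) set \<Rightarrow> (nat \<times> nat \<times> nat \<Rightarrow> elt) halg" where
  "prod_alg D = \<lparr> hcarrier = {x. (\<forall>d\<in>D. x d \<in> hcarrier (comp_alg d)) \<and> (\<forall>d. d \<notin> D \<longrightarrow> x d = 0)},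
      hmult = (\<lambda>x y d. if d \<in> D then hmult (comp_alg d) (x d) (y d) else 0),
      himp = (\<lambda>x y d. if d \<in> D then himp (comp_alg d) (x d) (y d) else 0),
      hone = (\<lambda>d. if d \<in> D then hone (comp_alg d) else 0) \<rparr>"

definition A_Delta :: "nat set \<Rightarrow> nat set \<Rightarrow> (nat \<times> nat \<times> nat \<Rightarrow> elt) halg" where
  "A_Delta I J = prod_alg (Delta I J)"

definition gbar_Delta :: "nat set \<Rightarrow> nat set \<Rightarrow> nat \<times> nat \<times> nat \<Rightarrow> elt" where
  "gbar_Delta I J = (\<lambda>d. if d \<in> Delta I J then gbar d else 0)"

definition B_Delta :: "nat set \<Rightarrow> nat set \<Rightarrow> (nat \<times> nat \<times> nat \<Rightarrow> elt) set" where
  "B_Delta I J = gen (A_Delta I J) {gbar_Delta I J}"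

definition embeddable_into :: "'a halg \<Rightarrow> 'b halg \<Rightarrow> 'b set \<Rightarrow> bool" where
  "embeddable_into A B S \<longleftrightarrow> (\<exists>f. f ` hcarrier A \<subseteq> S \<and> inj_on f (hcarrier A)
     \<and> f (hone A) = hone B
     \<and> (\<forall>a\<in>hcarrier A. \<forall>b\<in>hcarrier A. f (hmult A a b) = hmult B (f a) (f b)
                                     \<and> f (himp A a b) = himp B (f a) (f b)))"

end

theory Submission
  imports Defs
begin


instance prod :: (linordered_ab_group_add, linordered_ab_group_add) linordered_ab_group_add
  by standard (auto simp: less_eq_prod_def)

datatype tm = Var | One | Mul tm tm | Imp tm tm

primrec evt :: "('a, 'b) halg_scheme \<Rightarrow> 'a \<Rightarrow> tm \<Rightarrow> 'a" where
  "evt A x Var = x"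
| "evt A x One = hone A"
| "evt A x (Mul s t) = hmult A (evt A x s) (evt A x t)"
| "evt A x (Imp s t) = himp A (evt A x s) (evt A x t)"

primrec ev :: "elt \<Rightarrow> elt \<Rightarrow> tm \<Rightarrow> elt" where
  "ev u x Var = x"
| "ev u x One = u"
| "ev u x (Mul s t) = gmult u (ev u x s) (ev u x t)"
| "ev u x (Imp s t) = gimp u (ev u x s) (ev u x t)"

lemma evt_gen: "evt A x t \<in> gen A {x}"
  by (induction t) (auto intro: gen.intros)

definition ucomp :: "nat \<times> nat \<times> nat \<Rightarrow> elt" where
  "ucomp d = (case d of (k, h, i) \<Rightarrow> if i = 2 then (int k, 0) else (int k, int h))"

lemma comp_ops: "hmult (comp_alg d) = gmult (ucomp d)" "himp (comp_alg d) = gimp (ucomp d)"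
    "hone (comp_alg d) = ucomp d"
  by (auto simp: comp_alg_def ucomp_def Luk_def Luk_pair_def split: prod.splits)

lemma evt_comp: "evt (comp_alg d) x t = ev (ucomp d) x t"
  by (induction t) (auto simp: comp_ops)

lemma evt_prod:
  assumes "\<And>d. d \<notin> D \<Longrightarrow> X d = 0"
  shows "evt (prod_alg D) X t d = (if d \<in> D then ev (ucomp d) (X d) t else 0)"
  using assms by (induction t) (auto simp: prod_alg_def comp_ops)

lemma gen_mono_gen:
  assumes "y \<in> gen A X"
  shows "gen A {y} \<subseteq> gen A X"
proof
  fix z assume "z \<in> gen A {y}"
  then show "z \<in> gen A X" using assms by induction (auto intro: gen.intros)
qed

definition ualg :: "elt \<Rightarrow> elt halg" where
  "ualg u = \<lparr> hcarrier = {a. 0 \<le> a \<and> a \<le> u}, hmult = gmult u, himp = gimp u, hone = u \<rparr>"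

lemma Luk_pair_ualg: "Luk_pair n k = ualg (int n, int k)"
  by (simp add: Luk_pair_def ualg_def)

lemma gmult_closed: "0 \<le> a \<Longrightarrow> a \<le> u \<Longrightarrow> 0 \<le> b \<Longrightarrow> b \<le> u \<Longrightarrow> 0 \<le> gmult u a b \<and> gmult u a b \<le> u"
proof -
  assume "0 \<le> a" "a \<le> u" "0 \<le> b" "b \<le> u"
  then have "a + b - u \<le> u" by (simp add: algebra_simps add_mono)
  then show ?thesis unfolding gmult_def using \<open>0 \<le> a\<close> \<open>a \<le> u\<close> by simp
qed

lemma gimp_closed: assumes "0 \<le> a" "a \<le> u" "0 \<le> b" "b \<le> u" shows "0 \<le> gimp u a b \<and> gimp u a b \<le> u"
proof -
  have "0 \<le> u - a + b" using assms by (simp add: add_nonneg_nonneg)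
  then show ?thesis unfolding gimp_def using assms by (auto simp: min_def)
qed

lemma gen_ualg_carrier:
  assumes "0 \<le> g" "g \<le> u"
  shows "gen (ualg u) {g} \<subseteq> {a. 0 \<le> a \<and> a \<le> u}"
proof
  fix z assume "z \<in> gen (ualg u) {g}"
  then show "z \<in> {a. 0 \<le> a \<and> a \<le> u}" using assms
    by induction (auto simp: ualg_def gmult_closed gimp_closed)
qed

lemma criterion:
  fixes L :: "elt halg" and t :: tm and psi :: "nat \<times> nat \<times> nat \<Rightarrow> elt \<Rightarrow> elt"
  assumes Lu: "L = ualg u" and g: "0 \<le> g" "g \<le> u"
    and gen_all: "hcarrier L \<subseteq> gen L {g}"
    and d0: "d0 \<in> Delta I J" "inj_on (psi d0) (hcarrier L)"
    and hm: "\<And>d a b. d \<in> Delta I J \<Longrightarrow> a \<in> hcarrier L \<Longrightarrow> b \<in> hcarrier L \<Longrightarrow>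
        psi d (gmult u a b) = gmult (ucomp d) (psi d a) (psi d b)
      \<and> psi d (gimp u a b) = gimp (ucomp d) (psi d a) (psi d b)"
    and one: "\<And>d. d \<in> Delta I J \<Longrightarrow> psi d u = ucomp d"
    and val: "\<And>d. d \<in> Delta I J \<Longrightarrow> psi d g = ev (ucomp d) (gbar d) t"
  shows "embeddable_into L (A_Delta I J) (B_Delta I J)"
proof -
  define f where "f x = (\<lambda>d. if d \<in> Delta I J then psi d x else 0)" for x
  have car: "gen L {g} \<subseteq> hcarrier L" using gen_ualg_carrier[OF g] Lu by (simp add: ualg_def)
  have Lops: "hmult L = gmult u" "himp L = gimp u" "hone L = u" by (auto simp: Lu ualg_def)
  have hom: "f (hmult L a b) = hmult (A_Delta I J) (f a) (f b) \<and>
             f (himp L a b) = himp (A_Delta I J) (f a) (f b)" if "a \<in> hcarrier L" "b \<in> hcarrier L" for a b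
    using hm[OF _ that] by (auto simp: f_def A_Delta_def prod_alg_def comp_ops Lops)
  have fone: "f (hone L) = hone (A_Delta I J)"
    using one by (auto simp: f_def A_Delta_def prod_alg_def comp_ops Lops)
  have fg: "f g = evt (A_Delta I J) (gbar_Delta I J) t"
  proof
    fix d
    have "evt (A_Delta I J) (gbar_Delta I J) t d = (if d \<in> Delta I J then ev (ucomp d) (gbar_Delta I J d) t else 0)"
      unfolding A_Delta_def by (rule evt_prod) (simp add: gbar_Delta_def)
    then show "f g d = evt (A_Delta I J) (gbar_Delta I J) t d"
      by (simp add: f_def val gbar_Delta_def)
  qed
  have fgB: "f g \<in> B_Delta I J" unfolding B_Delta_def fg by (rule evt_gen)
  have img: "f x \<in> B_Delta I J" if "x \<in> gen L {g}" for x
  proof -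
    from that have "f x \<in> gen (A_Delta I J) {f g}"
    proof induction
      case (gen_base x) then show ?case by (auto intro: gen.intros)
    next
      case gen_one then show ?case unfolding fone by (rule gen.gen_one)
    next
      case (gen_mult a b)
      then have "a \<in> hcarrier L" "b \<in> hcarrier L" using car by auto
      then show ?case using hom gen_mult.IH gen.gen_mult by metis
    next
      case (gen_imp a b)
      then have "a \<in> hcarrier L" "b \<in> hcarrier L" using car by auto
      then show ?case using hom gen_imp.IH gen.gen_imp by metis
    qed
    then show ?thesis using gen_mono_gen[OF fgB[unfolded B_Delta_def]] by (auto simp: B_Delta_def)
  qed
  have inj: "inj_on f (hcarrier L)"
  proof (rule inj_onI)
    fix x y assume "x \<in> hcarrier L" "y \<in> hcarrier L" "f x = f y"
    then have "f x d0 = f y d0" by simp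
    then have "psi d0 x = psi d0 y" using d0(1) by (simp add: f_def)
    then show "x = y" using d0(2) \<open>x \<in> _\<close> \<open>y \<in> _\<close> by (meson inj_onD)
  qed
  have "f ` hcarrier L \<subseteq> B_Delta I J" using img gen_all by blast
  then show ?thesis unfolding embeddable_into_def
    using inj fone hom by (intro exI[of _ f]) simp
qed



definition det :: "elt \<Rightarrow> elt \<Rightarrow> int" where
  "det x y = fst x * snd y - snd x * fst y"

lemma lex_le: "(x::elt) \<le> y \<longleftrightarrow> fst x < fst y \<or> fst x = fst y \<and> snd x \<le> snd y"
  by (cases x; cases y) auto

lemma lex_lt: "(x::elt) < y \<longleftrightarrow> fst x < fst y \<or> fst x = fst y \<and> snd x < snd y"
  by (cases x; cases y) (auto simp: less_prod_def')

lemma euclid: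
  fixes S :: "elt set"
  assumes u10: "(1,0) \<le> u"
    and sub: "\<And>x y. x \<in> S \<Longrightarrow> y \<in> S \<Longrightarrow> x \<le> y \<Longrightarrow> y - x \<in> S"
    and add: "\<And>x y. x \<in> S \<Longrightarrow> y \<in> S \<Longrightarrow> x + y \<le> u \<Longrightarrow> x + y \<in> S"
    and nonneg: "\<And>x. x \<in> S \<Longrightarrow> 0 \<le> x"
  shows "x \<in> S \<Longrightarrow> y \<in> S \<Longrightarrow> x \<le> y \<Longrightarrow> det x y = 1 \<or> det x y = -1 \<Longrightarrow> (0,1) \<in> S \<and> (1,0) \<in> S"
proof (induction "nat (fst x + fst y)" arbitrary: x y rule: less_induct)
  case less
  have x0: "0 \<le> x" using nonneg less.prems by auto
  then have fx: "0 \<le> fst x" by (auto simp: lex_le)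
  have fxy: "fst x \<le> fst y" using less.prems(3) by (auto simp: lex_le)
  show ?case
  proof (cases "fst x = 0")
    case True
    then have sx: "0 \<le> snd x" using x0 by (auto simp: lex_le)
    have "snd x * fst y = 1 \<or> snd x * fst y = -1" using less.prems(4) True by (auto simp: det_def)
    moreover have "0 \<le> snd x * fst y" using sx fxy True by simp
    ultimately have "snd x * fst y = 1" by linarith
    then have sx1: "snd x = 1" and fy1: "fst y = 1" using sx fxy True
      by (auto simp: zmult_eq_1_iff)
    have x01: "x = (0,1)" using True sx1 by (cases x) auto
    have zero: "(0::elt) \<in> S" using sub[OF less.prems(1) less.prems(1)] by simp
    have cols: "(0, int n) \<in> S" for n
    proof (induction n)
      case 0 then show ?case using zero by (simp add: zero_prod_def)
    next
      case (Suc n)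
      have "(0, int (Suc n)) = (0, int n) + x" using x01 by simp
      moreover have "(0, int n) + x \<le> u" using u10 x01 by (auto simp: lex_le)
      ultimately show ?case using add[OF Suc less.prems(1)] by simp
    qed
    have "(1,0) \<in> S"
    proof (cases "0 \<le> snd y")
      case True
      have c: "(0, snd y) \<in> S" using cols[of "nat (snd y)"] True by simp
      have "(0, snd y) \<le> y" using fy1 by (auto simp: lex_le)
      from sub[OF c less.prems(2) this] show ?thesis using fy1 by (cases y) auto
    next
      case False
      have c: "(0, - snd y) \<in> S" using cols[of "nat (- snd y)"] False by simp
      have "y + (0, - snd y) = (1,0)" using fy1 by (cases y) auto
      with add[OF less.prems(2) c] u10 show ?thesis by simp
    qed
    then show ?thesis using x01 less.prems(1) by simp
  next
    case False
    then have fxp: "0 < fst x" using fx by simp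
    define z where "z = y - x"
    have zS: "z \<in> S" using sub[OF less.prems(1,2,3)] z_def by simp
    have dz: "det x z = det x y" by (simp add: z_def det_def algebra_simps)
    have mz: "nat (fst x + fst z) < nat (fst x + fst y)" using fxp fxy by (simp add: z_def)
    have mz2: "nat (fst z + fst x) < nat (fst x + fst y)" using fxp fxy by (simp add: z_def)
    show ?thesis
    proof (cases "x \<le> z")
      case True
      show ?thesis by (rule less.hyps[OF mz less.prems(1) zS True]) (use less.prems(4) dz in simp)
    next
      case False
      then have "z \<le> x" by simp
      moreover have "det z x = - det x z" by (simp add: det_def)
      ultimately show ?thesis using less.hyps[OF mz2 zS less.prems(1)] less.prems(4) dz by auto
    qed
  qed
qed

lemma fill:
  fixes S :: "elt set"
  assumes u10: "(1,0) \<le> u"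
    and sub: "\<And>x y. x \<in> S \<Longrightarrow> y \<in> S \<Longrightarrow> x \<le> y \<Longrightarrow> y - x \<in> S"
    and add: "\<And>x y. x \<in> S \<Longrightarrow> y \<in> S \<Longrightarrow> x + y \<le> u \<Longrightarrow> x + y \<in> S"
    and e1: "(0,1) \<in> S" and e2: "(1,0) \<in> S" and uS: "u \<in> S"
    and z: "0 \<le> z" "z \<le> u"
  shows "z \<in> S"
proof -
  have zero: "(0,0) \<in> S" using sub[OF e1 e1] by (simp add: zero_prod_def)
  have cols: "(0, int n) \<in> S" for n
  proof (induction n)
    case 0 then show ?case using zero by simp
  next
    case (Suc n)
    have eq: "(0::int, int (Suc n)) = (0::int, int n) + (0,1)" by (simp add: prod_eq_iff)
    have "(0::int, int n) + (0,1) \<le> u" using u10 by (auto simp: lex_le)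
    from add[OF Suc e1 this] show ?case unfolding eq .
  qed
  have rows: "int p < fst u \<Longrightarrow> (int p, 0) \<in> S" for p
  proof (induction p)
    case 0 then show ?case using zero by simp
  next
    case (Suc p)
    have eq: "(int (Suc p), 0::int) = (int p, 0::int) + (1,0)" by (simp add: prod_eq_iff)
    have "(int p, 0::int) + (1,0) \<le> u" using Suc.prems by (auto simp: lex_le)
    from add[OF Suc.IH[OF _] e2 this] Suc.prems show ?case unfolding eq by simp
  qed
  obtain p q where zpq: "z = (p,q)" by (cases z)
  have p0: "0 \<le> p" and pu: "p \<le> fst u" using z zpq by (auto simp: lex_le)
  show ?thesis
  proof (cases "p = 0")
    case True
    then have "0 \<le> q" using z zpq by (auto simp: lex_le)
    then show ?thesis using cols[of "nat q"] True zpq by simp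
  next
    case pnz: False
    show ?thesis
    proof (cases "p = fst u")
      case True
      then have "q \<le> snd u" using z zpq by (auto simp: lex_le)
      have c: "(0, snd u - q) \<in> S" using cols[of "nat (snd u - q)"] \<open>q \<le> snd u\<close> by simp
      have "(0, snd u - q) \<le> u" using u10 by (auto simp: lex_le)
      from sub[OF c uS this] show ?thesis using True zpq by (cases u) auto
    next
      case False
      then have plt: "p < fst u" using pu by simp
      have r: "(p, 0) \<in> S" using rows[of "nat p"] p0 plt by simp
      show ?thesis
      proof (cases "0 \<le> q")
        case True
        have c: "(0, q) \<in> S" using cols[of "nat q"] True by simp
        have "(p,0) + (0,q) \<le> u" using plt by (auto simp: lex_le)
        from add[OF r c this] show ?thesis using zpq by simp
      next
        case False
        have c: "(0, -q) \<in> S" using cols[of "nat (-q)"] False by simp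
        have "(0,-q) \<le> (p,0)" using p0 pnz by (auto simp: lex_le)
        from sub[OF c r this] show ?thesis using zpq by simp
      qed
    qed
  qed
qed

lemma gimp_zero: "0 \<le> x \<Longrightarrow> gimp u x 0 = u - x"
  by (simp add: gimp_def min_def)

definition cand :: "elt \<Rightarrow> elt \<Rightarrow> bool" where
  "cand u a \<longleftrightarrow> 0 \<le> a \<and> a + a \<le> u \<and> (det a u = 1 \<or> det a u = -1)"

lemma cand_gen:
  assumes u10: "(1,0) \<le> u" and c: "cand u a"
  shows "gen (ualg u) {a} = {z. 0 \<le> z \<and> z \<le> u}" "0 \<le> a" "a \<le> u" "a \<le> gimp u a 0"
proof -
  have a0: "0 \<le> a" and aa: "a + a \<le> u" using c by (auto simp: cand_def)
  have au: "a \<le> u" using a0 aa by (meson add_increasing order_trans order_refl)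
  then show "0 \<le> a" "a \<le> u" using a0 by auto
  show "a \<le> gimp u a 0" using a0 aa by (simp add: gimp_zero algebra_simps le_diff_eq)
  define S where "S = gen (ualg u) {a}"
  have Sc: "S \<subseteq> {z. 0 \<le> z \<and> z \<le> u}" unfolding S_def by (rule gen_ualg_carrier[OF a0 au])
  have aS: "a \<in> S" by (simp add: S_def gen.gen_base)
  have uS: "u \<in> S" unfolding S_def using gen.gen_one[of "ualg u" "{a}"] by (simp add: ualg_def)
  have ops: "hmult (ualg u) = gmult u" "himp (ualg u) = gimp u" by (auto simp: ualg_def)
  have zS: "0 \<in> S"
  proof -
    have "gmult u a a = 0" using aa by (simp add: gmult_def max_def)
    then show ?thesis using gen.gen_mult[OF aS[unfolded S_def] aS[unfolded S_def]] by (simp add: S_def ops)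
  qed
  have sub: "y - x \<in> S" if "x \<in> S" "y \<in> S" "x \<le> y" for x y
  proof -
    have x0: "0 \<le> x" "x \<le> u" and y0: "0 \<le> y" "y \<le> u" using Sc that by auto
    have "gimp u x 0 \<in> S" using gen.gen_imp[of x "ualg u" "{a}" 0] that zS by (simp add: S_def ops)
    then have "gmult u y (gimp u x 0) \<in> S" using gen.gen_imp gen.gen_mult[of y "ualg u" "{a}"] that
      by (simp add: S_def ops)
    moreover have "gmult u y (gimp u x 0) = y - x" using x0 that(3)
      by (simp add: gimp_zero gmult_def max_def algebra_simps)
    ultimately show ?thesis by simp
  qed
  have add: "x + y \<in> S" if "x \<in> S" "y \<in> S" "x + y \<le> u" for x y
  proof -
    have x0: "0 \<le> x" "x \<le> u" using Sc that by auto
    have "gimp u x 0 \<in> S" using gen.gen_imp[of x "ualg u" "{a}" 0] that zS by (simp add: S_def ops)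
    then have "gimp u (gimp u x 0) y \<in> S" using gen.gen_imp[of _ "ualg u" "{a}" y] that
      by (simp add: S_def ops)
    moreover have "gimp u (gimp u x 0) y = x + y" using x0 that(3)
      by (simp add: gimp_zero gimp_def min_def algebra_simps)
    ultimately show ?thesis by simp
  qed
  have nn: "\<And>x. x \<in> S \<Longrightarrow> 0 \<le> x" using Sc by auto
  have dets: "det a u = 1 \<or> det a u = -1" using c by (simp add: cand_def)
  have e: "(0,1) \<in> S \<and> (1,0) \<in> S" by (rule euclid[OF u10 sub add nn aS uS au dets])
  have "{z. 0 \<le> z \<and> z \<le> u} \<subseteq> S"
    using fill[OF u10 sub add] e uS by blast
  then show "gen (ualg u) {a} = {z. 0 \<le> z \<and> z \<le> u}" using Sc by (auto simp: S_def)
qed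

lemma gen_lattice:
  assumes "z \<in> gen (ualg u) {a}"
  shows "\<exists>m n. z = (m * fst a + n * fst u, m * snd a + n * snd u)"
  using assms
proof induction
  case (gen_base x) then show ?case by (intro exI[of _ 1] exI[of _ 0]) simp
next
  case gen_one then show ?case by (intro exI[of _ 0] exI[of _ 1]) (simp add: ualg_def)
next
  case (gen_mult x y)
  then obtain m1 n1 m2 n2 where x: "x = (m1 * fst a + n1 * fst u, m1 * snd a + n1 * snd u)"
    and y: "y = (m2 * fst a + n2 * fst u, m2 * snd a + n2 * snd u)" by blast
  show ?case
  proof (cases "x + y - u \<ge> 0")
    case True
    then have eq: "hmult (ualg u) x y = x + y - u" by (simp add: ualg_def gmult_def)
    show ?thesis unfolding eq by (intro exI[of _ "m1+m2"] exI[of _ "n1+n2-1"]) (simp add: x y prod_eq_iff algebra_simps)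
  next
    case False
    then have "x + y - u \<le> 0" by simp
    then have "hmult (ualg u) x y = 0" by (simp add: ualg_def gmult_def max_def)
    then show ?thesis by (intro exI[of _ 0] exI[of _ 0]) (simp add: zero_prod_def)
  qed
next
  case (gen_imp x y)
  then obtain m1 n1 m2 n2 where x: "x = (m1 * fst a + n1 * fst u, m1 * snd a + n1 * snd u)"
    and y: "y = (m2 * fst a + n2 * fst u, m2 * snd a + n2 * snd u)" by blast
  show ?case
  proof (cases "u - x + y \<le> u")
    case True
    then have eq: "himp (ualg u) x y = u - x + y" by (simp add: ualg_def gimp_def)
    show ?thesis unfolding eq by (intro exI[of _ "m2-m1"] exI[of _ "1-n1+n2"]) (simp add: x y prod_eq_iff algebra_simps)
  next
    case False
    then have "himp (ualg u) x y = u" by (simp add: ualg_def gimp_def min_def)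
    then show ?thesis by (intro exI[of _ 0] exI[of _ 1]) simp
  qed
qed

lemma gen_cand:
  assumes u10: "(1,0) \<le> u" and a: "0 \<le> a" "a \<le> u" "a \<le> gimp u a 0"
    and g: "gen (ualg u) {a} = {z. 0 \<le> z \<and> z \<le> u}"
  shows "cand u a"
proof -
  have "(1,0) \<in> {z. 0 \<le> z \<and> z \<le> u}" using u10 by (simp add: lex_le)
  then have "(1,0) \<in> gen (ualg u) {a}" unfolding g .
  then obtain m1 n1 where e1: "(1::int,0::int) = (m1 * fst a + n1 * fst u, m1 * snd a + n1 * snd u)"
    using gen_lattice by blast
  have "(0,1) \<le> (1::int,0::int)" by (simp add: lex_le)
  then have "(0,1) \<in> {z. 0 \<le> z \<and> z \<le> u}" using u10 by (simp add: lex_le, linarith)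
  then have "(0,1) \<in> gen (ualg u) {a}" unfolding g .
  then obtain m2 n2 where e2: "(0::int,1::int) = (m2 * fst a + n2 * fst u, m2 * snd a + n2 * snd u)"
    using gen_lattice by blast
  have c1: "m1 * fst a + n1 * fst u = 1" "m1 * snd a + n1 * snd u = 0" using e1 by simp_all
  have c2: "m2 * fst a + n2 * fst u = 0" "m2 * snd a + n2 * snd u = 1" using e2 by simp_all
  have "(m1*n2 - n1*m2) * det a u = (m1 * fst a + n1 * fst u) * (m2 * snd a + n2 * snd u)
     - (m1 * snd a + n1 * snd u) * (m2 * fst a + n2 * fst u)"
    unfolding det_def by (simp add: algebra_simps)
  also have "\<dots> = 1" unfolding c1 c2 by simp
  finally have "(m1*n2 - n1*m2) * det a u = 1" .
  then have "det a u = 1 \<or> det a u = -1" unfolding zmult_eq_1_iff by blast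
  moreover have "a + a \<le> u"
  proof -
    have "a \<le> u - a" using a(1,3) by (simp add: gimp_zero)
    then show ?thesis by (simp add: le_diff_eq)
  qed
  ultimately show ?thesis using a unfolding cand_def by blast
qed

lemma cand_unique:
  assumes k: "2 \<le> k" and cop: "coprime k h"
    and ca: "cand (int k, int h) a" and cb: "cand (int k, int h) b"
  shows "a = b"
proof -
  obtain r s where a: "a = (r,s)" by (cases a)
  obtain r' s' where b: "b = (r',s')" by (cases b)
  have copi: "coprime (int k) (int h)" using cop by (simp add: coprime_int_iff)
  have r0: "0 \<le> r" "2 * r \<le> int k" and ea: "r * int h - s * int k = 1 \<or> r * int h - s * int k = -1"
    and la: "2 * r < int k \<or> 2 * r = int k \<and> 2 * s \<le> int h"
    using ca a by (auto simp: cand_def lex_le det_def)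
  have r0': "0 \<le> r'" "2 * r' \<le> int k" and eb: "r' * int h - s' * int k = 1 \<or> r' * int h - s' * int k = -1"
    and lb: "2 * r' < int k \<or> 2 * r' = int k \<and> 2 * s' \<le> int h"
    using cb b by (auto simp: cand_def lex_le det_def)
  have "r = r' \<and> s = s'"
  proof (cases "r * int h - s * int k = r' * int h - s' * int k")
    case True
    then have "(r - r') * int h = (s - s') * int k" by (simp add: algebra_simps)
    moreover have "int k dvd (s - s') * int k" by simp
    ultimately have "int k dvd (r - r') * int h" by simp
    then have "int k dvd (r - r')" using copi by (simp add: coprime_dvd_mult_left_iff)
    then obtain c where c: "r - r' = int k * c" by blast
    have "c = 0"
    proof (rule ccontr)
      assume "c \<noteq> 0"
      then have "int k \<le> \<bar>int k * c\<bar>" using k by (simp add: abs_mult)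
      then show False using c r0 r0' k by linarith
    qed
    then have "r = r'" using c by simp
    then show ?thesis using True k by simp
  next
    case False
    then have sum: "(r + r') * int h = (s + s') * int k + (r * int h - s * int k) + (r' * int h - s' * int k)"
      by (simp add: algebra_simps)
    have "(r * int h - s * int k) + (r' * int h - s' * int k) = 0" using False ea eb by auto
    then have "(r + r') * int h = (s + s') * int k" using sum by simp
    moreover have "int k dvd (s + s') * int k" by simp
    ultimately have "int k dvd (r + r') * int h" by simp
    then have "int k dvd (r + r')" using copi by (simp add: coprime_dvd_mult_left_iff)
    then obtain c where c: "r + r' = int k * c" by blast
    have "c = 0 \<or> c = 1"
    proof -
      have "0 \<le> int k * c" "int k * c \<le> int k" using c r0 r0' by linarith+
      moreover have "c < 0 \<Longrightarrow> int k * c < 0" using k by (simp add: mult_pos_neg)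
      moreover have "2 \<le> c \<Longrightarrow> int k * 2 \<le> int k * c" by (rule mult_left_mono) simp_all
      ultimately show ?thesis using k by linarith
    qed
    then show ?thesis
    proof
      assume "c = 0"
      then have "r = 0" using c r0 r0' by simp
      then have "- s * int k = 1 \<or> - s * int k = -1" using ea by simp
      then have "1 = int k * (-s) \<or> 1 = int k * s" by (auto simp: algebra_simps)
      then have "int k dvd 1" by (metis dvdI)
      then show ?thesis using k by simp
    next
      assume "c = 1"
      then have "r + r' = int k" using c by simp
      then have "2 * r = int k" "2 * r' = int k" using r0 r0' by linarith+
      then have "r = r'" by simp
      have "2 * s \<le> int h" "2 * s' \<le> int h" using la lb \<open>2 * r = int k\<close> \<open>2 * r' = int k\<close> by auto
      show ?thesis
      proof -
        have e1: "r * (int h - 2 * s) = r * int h - s * int k" using \<open>2 * r = int k\<close> by (simp add: algebra_simps flip: \<open>2 * r = int k\<close>)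
        have e2: "r * (int h - 2 * s') = r' * int h - s' * int k" using \<open>2 * r' = int k\<close> \<open>r = r'\<close> by (simp add: algebra_simps flip: \<open>2 * r' = int k\<close>)
        have "0 \<le> r * (int h - 2 * s)" "0 \<le> r * (int h - 2 * s')"
          using r0 \<open>2 * s \<le> int h\<close> \<open>2 * s' \<le> int h\<close> by simp_all
        then have "r * int h - s * int k = 1" "r' * int h - s' * int k = 1" using e1 e2 ea eb by linarith+
        then show ?thesis using False by simp
      qed
    qed
  qed
  then show ?thesis using a b by simp
qed

lemma cand_exists:
  assumes k: "2 \<le> k" and cop: "coprime k h"
  shows "\<exists>a. cand (int k, int h) a"
proof -
  have copi: "coprime (int h) (int k)" using cop by (simp add: coprime_int_iff coprime_commute)
  obtain x y where xy: "x * int h + y * int k = 1"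
    using bezout_int[of "int h" "int k"] copi by (auto simp: coprime_iff_gcd_eq_1)
  define r where "r = x mod int k"
  define s where "s = - y - (x div int k) * int h"
  have det1: "r * int h - s * int k = 1"
  proof -
    have rx: "r = x - (x div int k) * int k" by (simp add: r_def minus_div_mult_eq_mod)
    have "r * int h - s * int k = x * int h + y * int k"
      unfolding rx s_def by (simp add: algebra_simps)
    then show ?thesis using xy by simp
  qed
  have r0: "0 \<le> r" "r < int k" using k by (auto simp: r_def)
  have rnz: "r \<noteq> 0"
  proof
    assume "r = 0"
    then have "1 = int k * (-s)" using det1 by (simp add: algebra_simps)
    then have "int k dvd 1" by (rule dvdI)
    then show False using k by simp
  qed
  consider "2 * r < int k" | "2 * r = int k" | "2 * r > int k" by linarith
  then show ?thesis
  proof cases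
    case 1
    then show ?thesis using r0 rnz det1
      by (intro exI[of _ "(r,s)"]) (auto simp: cand_def lex_le det_def)
  next
    case 2
    then have "r * (int h - 2 * s) = 1" using det1 by (simp add: algebra_simps flip: 2)
    then have "r = 1" "int h - 2 * s = 1" using r0 by (auto simp: zmult_eq_1_iff)
    then show ?thesis using 2 det1
      by (intro exI[of _ "(r,s)"]) (auto simp: cand_def lex_le det_def)
  next
    case 3
    have "(int k - r) * int h - (int h - s) * int k = -1" using det1 by (simp add: algebra_simps)
    then show ?thesis using 3 r0
      by (intro exI[of _ "(int k - r, int h - s)"]) (auto simp: cand_def lex_le det_def)
  qed
qed

lemma lneg_eq: "lneg k h a = gimp (int k, int h) a 0"
  by (simp add: lneg_def Luk_pair_def)

lemma gen_el_cand:
  assumes k: "2 \<le> k" and cop: "coprime k h"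
  shows "cand (int k, int h) (gen_el k h)"
proof -
  let ?u = "(int k, int h)"
  have u10: "(1,0) \<le> ?u" using k by (simp add: lex_le)
  have car: "hcarrier (Luk_pair k h) = {z. 0 \<le> z \<and> z \<le> ?u}" by (simp add: Luk_pair_ualg ualg_def)
  let ?P = "\<lambda>a. a \<in> hcarrier (Luk_pair k h) \<and> a \<le> lneg k h a \<and> gen (Luk_pair k h) {a} = hcarrier (Luk_pair k h)"
  have P_iff: "?P a \<longleftrightarrow> cand ?u a" for a
  proof
    assume P: "?P a"
    then have a0: "0 \<le> a" "a \<le> ?u" using car by blast+
    have a1: "a \<le> gimp ?u a 0" using P by (simp add: lneg_eq)
    have g: "gen (ualg ?u) {a} = {z. 0 \<le> z \<and> z \<le> ?u}" using P car by (simp add: Luk_pair_ualg)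
    show "cand ?u a" by (rule gen_cand[OF u10 a0 a1 g])
  next
    assume c: "cand ?u a"
    note cg = cand_gen[OF u10 c]
    show "?P a" unfolding car lneg_eq Luk_pair_ualg using cg by (simp add: ualg_def)
  qed
  obtain a where "cand ?u a" using cand_exists[OF k cop] by blast
  then have ex1: "\<exists>!a. ?P a" using cand_unique[OF k cop] P_iff by blast
  have "gen_el k h = (THE a. ?P a)" using k by (simp add: gen_el_def)
  then have "?P (gen_el k h)" using theI'[OF ex1] by simp
  then show ?thesis using P_iff by blast
qed



definition nmul :: "nat \<Rightarrow> elt \<Rightarrow> elt" where
  "nmul n y = (int n * fst y, int n * snd y)"

lemma nmul_0[simp]: "nmul 0 y = 0" by (simp add: nmul_def zero_prod_def)
lemma nmul_Suc: "nmul (Suc n) y = y + nmul n y" by (simp add: nmul_def algebra_simps prod_eq_iff)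
lemma nmul_fst[simp]: "fst (nmul n y) = int n * fst y" by (simp add: nmul_def)
lemma nmul_snd[simp]: "snd (nmul n y) = int n * snd y" by (simp add: nmul_def)
lemma nmul_nonneg: "0 \<le> y \<Longrightarrow> 0 \<le> nmul n y"
  by (induction n) (simp_all add: nmul_Suc add_nonneg_nonneg)
lemma nmul_mono: "0 \<le> y \<Longrightarrow> m \<le> n \<Longrightarrow> nmul m y \<le> nmul n y"
proof (induction n)
  case 0 then show ?case by simp
next
  case (Suc n)
  show ?case
  proof (cases "m = Suc n")
    case True then show ?thesis by simp
  next
    case False
    then have "nmul m y \<le> nmul n y" using Suc by simp
    also have "\<dots> \<le> y + nmul n y" using Suc.prems by (simp add: add_increasing)
    finally show ?thesis by (simp add: nmul_Suc)
  qed
qed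

lemma ev_closed: "0 \<le> u \<Longrightarrow> 0 \<le> x \<Longrightarrow> x \<le> u \<Longrightarrow> 0 \<le> ev u x t \<and> ev u x t \<le> u"
  by (induction t) (auto simp: gmult_closed gimp_closed)

primrec pw :: "tm \<Rightarrow> nat \<Rightarrow> tm" where
  "pw t 0 = One"
| "pw t (Suc n) = Mul t (pw t n)"

lemma ev_pw:
  assumes u: "0 \<le> u" and y: "0 \<le> ev u x t" "ev u x t \<le> u"
  shows "ev u x (pw t n) = max (u - nmul n (u - ev u x t)) 0"
proof (induction n)
  case 0 then show ?case using u by simp
next
  case (Suc n)
  define y where "y = ev u x t"
  define c where "c = u - y"
  have c0: "0 \<le> c" using y by (simp add: c_def y_def)
  have "ev u x (pw t (Suc n)) = gmult u y (max (u - nmul n c) 0)" using Suc by (simp add: y_def c_def)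
  also have "\<dots> = max (u - nmul (Suc n) c) 0"
  proof (cases "0 \<le> u - nmul n c")
    case True
    then have "gmult u y (max (u - nmul n c) 0) = max (y + (u - nmul n c) - u) 0" by (simp add: gmult_def)
    also have "y + (u - nmul n c) - u = u - nmul (Suc n) c" by (simp add: c_def nmul_Suc algebra_simps)
    finally show ?thesis .
  next
    case False
    then have m: "max (u - nmul n c) 0 = 0" by simp
    have "y - u \<le> 0" using y by (simp add: y_def)
    then have "gmult u y 0 = 0" by (simp add: gmult_def)
    moreover have "u - nmul (Suc n) c \<le> 0" using False c0
      by (simp add: nmul_Suc algebra_simps) (meson add_increasing dual_order.trans le_add_diff_inverse2 linorder_not_le order.order_iff_strict)
    ultimately show ?thesis using m by simp
  qed
  finally show ?case by (simp add: y_def c_def)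
qed


definition Zt :: "nat \<Rightarrow> tm" where "Zt N = pw Var N"
definition Ng :: "nat \<Rightarrow> tm \<Rightarrow> tm" where "Ng N t = Imp t (Zt N)"
definition Op :: "nat \<Rightarrow> tm \<Rightarrow> tm \<Rightarrow> tm" where "Op N t s = Imp (Ng N t) s"
primrec sm :: "nat \<Rightarrow> tm \<Rightarrow> nat \<Rightarrow> tm" where
  "sm N t 0 = t"
| "sm N t (Suc n) = Op N t (sm N t n)"
definition Mn :: "tm \<Rightarrow> tm \<Rightarrow> tm" where "Mn t s = Mul t (Imp t s)"

lemma fst_lt_imp_lt: "fst (a::elt) < fst b \<Longrightarrow> a < b"
  by (simp add: lex_lt)

lemma fst_nonneg: "0 \<le> (a::elt) \<Longrightarrow> 0 \<le> fst a"
  by (auto simp: lex_le)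

lemma ev_Zt_zero:
  assumes "0 \<le> u" "0 \<le> x" "x \<le> u" "fst u < int N" "1 \<le> fst (u - x)"
  shows "ev u x (Zt N) = 0"
proof -
  have e: "ev u x (Zt N) = max (u - nmul N (u - x)) 0" unfolding Zt_def
    using ev_pw[of u x Var N] assms by simp
  have "int N * 1 \<le> int N * fst (u - x)" using assms(5) by (intro mult_left_mono) simp_all
  then have "fst (u - nmul N (u - x)) < fst 0" using assms(4) by simp
  then have "u - nmul N (u - x) < 0" by (rule fst_lt_imp_lt)
  then show ?thesis using e by simp
qed

context
  fixes u x :: elt and N :: nat
  assumes u0: "0 \<le> u" and x0: "0 \<le> x" and xu: "x \<le> u" and z0: "ev u x (Zt N) = 0"
begin

lemma cl: "0 \<le> ev u x t" "ev u x t \<le> u" using ev_closed[OF u0 x0 xu] by auto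

lemma ev_Ng: "ev u x (Ng N t) = u - ev u x t"
  unfolding Ng_def using cl[of t] by (simp add: z0 gimp_zero)

lemma ev_Op: "ev u x (Op N t s) = min (ev u x t + ev u x s) u"
  unfolding Op_def by (simp add: ev_Ng gimp_def algebra_simps)

lemma ev_sm: "ev u x (sm N t n) = min (nmul (Suc n) (ev u x t)) u"
proof (induction n)
  case 0 then show ?case using cl[of t] by (simp add: nmul_Suc)
next
  case (Suc n)
  define y where "y = ev u x t"
  have y0: "0 \<le> y" using cl by (simp add: y_def)
  have "ev u x (sm N t (Suc n)) = min (y + min (nmul (Suc n) y) u) u"
    by (simp add: ev_Op Suc y_def)
  also have "\<dots> = min (nmul (Suc (Suc n)) y) u"
  proof -
    define a where "a = nmul (Suc n) y"
    have ss: "nmul (Suc (Suc n)) y = y + a" by (simp add: a_def nmul_Suc[of "Suc n"])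
    show ?thesis
    proof (cases "a \<le> u")
      case True then show ?thesis unfolding ss a_def[symmetric] by simp
    next
      case False
      then have "u \<le> y + a" using y0 by (meson add_increasing linorder_not_le order_less_imp_le)
      moreover have "u \<le> y + u" using y0 by simp
      ultimately show ?thesis unfolding ss a_def[symmetric] using False by simp
    qed
  qed
  finally show ?case by (simp add: y_def)
qed

lemma ev_Mn: "ev u x (Mn t s) = min (ev u x t) (ev u x s)"
proof -
  define y where "y = ev u x t"
  define z where "z = ev u x s"
  have y: "0 \<le> y" "y \<le> u" and z: "0 \<le> z" "z \<le> u" using cl by (auto simp: y_def z_def)
  have "ev u x (Mn t s) = gmult u y (min (u - y + z) u)" by (simp add: Mn_def gimp_def y_def z_def)
  also have "\<dots> = max (min z y) 0"
  proof -
    have "y + min (u - y + z) u - u = min z y" by (simp add: min_def algebra_simps)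
    then show ?thesis by (simp add: gmult_def)
  qed
  also have "\<dots> = min y z"
  proof -
    have "0 \<le> min z y" using y z by simp
    then have "max (min z y) 0 = min z y" by (rule max_absorb1)
    then show ?thesis by (simp only: min.commute)
  qed
  finally show ?thesis by (simp add: y_def z_def)
qed

end



lemma nmul_zero[simp]: "nmul n 0 = 0" by (simp add: nmul_def zero_prod_def)

definition Pt :: "nat \<Rightarrow> tm \<Rightarrow> tm" where
  "Pt N D = Ng N (sm N (Mul D (sm N D (N - 2))) (N - 1))"
definition Yt :: "nat \<Rightarrow> tm" where
  "Yt N = Imp (Zt N) (Mul (Zt N) Var)"
primrec db :: "tm \<Rightarrow> nat" where
  "db Var = 1" | "db One = 0" | "db (Mul s t) = db s + db t" | "db (Imp s t) = db t"
definition bt :: "nat \<Rightarrow> tm \<Rightarrow> tm \<Rightarrow> tm" where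
  "bt N D Q = Imp (pw (Yt N) (db (Imp (Pt N D) Q))) (Imp (Pt N D) Q)"

context
  fixes u x :: elt and N :: nat
  assumes u0: "0 \<le> u" and x0: "0 \<le> x" and xu: "x \<le> u" and z0: "ev u x (Zt N) = 0"
begin

lemma cl': "0 \<le> ev u x t" "ev u x t \<le> u" using ev_closed[OF u0 x0 xu] by auto

lemma ev_Yt_pw: "ev u x (pw (Yt N) L) = u"
proof -
  have "gmult u 0 x = 0" using xu by (simp add: gmult_def max_def)
  then have y: "ev u x (Yt N) = u" by (simp add: Yt_def z0 gimp_def)
  show ?thesis using ev_pw[OF u0, of x "Yt N" L] y u0 by simp
qed

lemma G_inf:
  assumes fu: "1 \<le> fst u" and N2: "2 \<le> N" and fd: "fst (ev u x D) = 0"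
  shows "ev u x (bt N D Q) = ev u x Q"
proof -
  define d where "d = ev u x D"
  have d0: "0 \<le> d" using cl' d_def by simp
  have s1: "ev u x (sm N D (N - 2)) = min (nmul (N - 1) d) u"
    using ev_sm[OF u0 x0 xu z0] N2 by (simp add: d_def Suc_diff_Suc numeral_2_eq_2)
  have "fst (nmul (N - 1) d) < fst u" using fd fu by (simp add: d_def)
  then have "nmul (N - 1) d < u" by (rule fst_lt_imp_lt)
  then have s1': "ev u x (sm N D (N - 2)) = nmul (N - 1) d" using s1 by simp
  have "fst (d + nmul (N - 1) d - u) < fst 0" using fd fu by (simp add: d_def)
  then have "d + nmul (N - 1) d - u < 0" by (rule fst_lt_imp_lt)
  then have T: "ev u x (Mul D (sm N D (N - 2))) = 0" using s1' by (simp add: gmult_def d_def)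
  have "ev u x (sm N (Mul D (sm N D (N - 2))) (N - 1)) = 0"
    using ev_sm[OF u0 x0 xu z0] T u0 by (simp add: nmul_def zero_prod_def)
  then have P: "ev u x (Pt N D) = u" using ev_Ng[OF u0 x0 xu z0] by (simp add: Pt_def)
  have q: "ev u x (Imp (Pt N D) Q) = ev u x Q" using P cl'[of Q] by (simp add: gimp_def)
  show ?thesis unfolding bt_def using q ev_Yt_pw cl'[of Q] by (simp add: gimp_def)
qed

lemma G_big:
  assumes fu: "1 \<le> fst u" and fN: "fst u < int N" and fd: "1 \<le> fst (ev u x D)"
  shows "ev u x (bt N D Q) = u"
proof -
  define d where "d = ev u x D"
  have d0: "0 \<le> d" "d \<le> u" using cl' d_def by simp_all
  have N2: "2 \<le> N" using fu fN by linarith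
  have s1: "ev u x (sm N D (N - 2)) = min (nmul (N - 1) d) u"
    using ev_sm[OF u0 x0 xu z0] N2 by (simp add: d_def Suc_diff_Suc numeral_2_eq_2)
  have fT: "1 \<le> fst (ev u x (Mul D (sm N D (N - 2))))"
  proof (cases "nmul (N - 1) d \<le> u")
    case True
    have nm: "d + nmul (N - 1) d = nmul N d" using N2 nmul_Suc[of "N - 1" d] by simp
    have "int N * 1 \<le> int N * fst d" using fd by (intro mult_left_mono) (simp_all add: d_def)
    then have f1: "1 \<le> fst (nmul N d - u)" using fN by simp
    then have "0 < nmul N d - u" using fst_lt_imp_lt[of 0 "nmul N d - u"] by simp
    then have "ev u x (Mul D (sm N D (N - 2))) = nmul N d - u" using s1 True nm
      by (simp add: gmult_def d_def)
    then show ?thesis using f1 by simp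
  next
    case False
    then have "ev u x (Mul D (sm N D (N - 2))) = d" using s1 d0 by (simp add: gmult_def d_def)
    then show ?thesis using fd d_def by simp
  qed
  define T where "T = ev u x (Mul D (sm N D (N - 2)))"
  have "int N * 1 \<le> int N * fst T" using fT by (intro mult_left_mono) (simp_all add: T_def)
  then have "fst u < fst (nmul N T)" using fN by simp
  then have "u < nmul N T" by (rule fst_lt_imp_lt)
  then have "ev u x (sm N (Mul D (sm N D (N - 2))) (N - 1)) = u"
    using ev_sm[OF u0 x0 xu z0] N2 by (simp add: T_def Suc_diff_Suc)
  then have P: "ev u x (Pt N D) = 0" using ev_Ng[OF u0 x0 xu z0] by (simp add: Pt_def)
  have q: "ev u x (Imp (Pt N D) Q) = u" using P cl'[of Q] by (simp add: gimp_def)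
  show ?thesis unfolding bt_def using q ev_Yt_pw by (simp add: gimp_def)
qed

end

lemma ev_depth:
  "\<exists>m. ev (1,0) (1,-1) t = (1, - int m) \<and> m \<le> db t"
proof (induction t)
  case Var then show ?case by (intro exI[of _ 1]) simp
next
  case One then show ?case by (intro exI[of _ 0]) simp
next
  case (Mul s t)
  then obtain a b where a: "ev (1,0) (1,-1) s = (1, - int a)" "a \<le> db s"
    and b: "ev (1,0) (1,-1) t = (1, - int b)" "b \<le> db t" by blast
  have "gmult (1,0) (1, - int a) (1, - int b) = (1, - int (a + b))"
    by (simp add: gmult_def max_def lex_le)
  then show ?case using a b by (intro exI[of _ "a + b"]) simp
next
  case (Imp s t)
  then obtain a b where a: "ev (1,0) (1,-1) s = (1, - int a)" "a \<le> db s"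
    and b: "ev (1,0) (1,-1) t = (1, - int b)" "b \<le> db t" by blast
  have "gimp (1,0) (1, - int a) (1, - int b) = (1, - int (b - a))"
    by (simp add: gimp_def min_def lex_le)
  then show ?case using a b by (intro exI[of _ "b - a"]) simp
qed

lemma ev101_pw: "ev (1,0) (1,-1) (pw Var n) = (1, - int n)"
  by (induction n) (simp_all add: gmult_def max_def lex_le)

lemma G_101: "ev (1,0) (1,-1) (bt N D Q) = (1,0)"
proof -
  define L where "L = db (Imp (Pt N D) Q)"
  obtain m where m: "ev (1,0) (1,-1) (Imp (Pt N D) Q) = (1, - int m)" "m \<le> L"
    using ev_depth L_def by blast
  have "ev (1,0) (1,-1) (Yt N) = (1, -1)"
    by (simp add: Yt_def Zt_def ev101_pw gmult_def gimp_def max_def min_def lex_le)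
  then have "ev (1,0) (1,-1) (pw (Yt N) n) = (1, - int n)" for n
    by (induction n) (simp_all add: gmult_def max_def lex_le)
  then show ?thesis unfolding bt_def L_def[symmetric] using m
    by (simp add: gimp_def min_def lex_le)
qed



definition lin :: "int \<Rightarrow> int \<Rightarrow> elt \<Rightarrow> elt" where
  "lin c e x = (fst x, c * snd x + e * fst x)"

lemma lin_add: "lin c e (a + b) = lin c e a + lin c e b"
  by (simp add: lin_def algebra_simps)
lemma lin_diff: "lin c e (a - b) = lin c e a - lin c e b"
  by (simp add: lin_def algebra_simps)
lemma lin_zero: "lin c e 0 = 0"
  by (simp add: lin_def zero_prod_def)
lemma lin_mono: "0 \<le> c \<Longrightarrow> a \<le> b \<Longrightarrow> lin c e a \<le> lin c e b"
  by (auto simp: lin_def lex_le intro: mult_left_mono)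
lemma lin_max: "0 \<le> c \<Longrightarrow> lin c e (max a b) = max (lin c e a) (lin c e b)"
  by (cases "a \<le> b") (auto simp: max_def dest: lin_mono[of c a b e] lin_mono[of c b a e])
lemma lin_min: "0 \<le> c \<Longrightarrow> lin c e (min a b) = min (lin c e a) (lin c e b)"
  by (cases "a \<le> b") (auto simp: min_def dest: lin_mono[of c a b e] lin_mono[of c b a e])
lemma lin_gmult: "0 \<le> c \<Longrightarrow> lin c e (gmult u a b) = gmult (lin c e u) (lin c e a) (lin c e b)"
  by (simp add: gmult_def lin_max lin_add lin_diff lin_zero)
lemma lin_gimp: "0 \<le> c \<Longrightarrow> lin c e (gimp u a b) = gimp (lin c e u) (lin c e a) (lin c e b)"
  by (simp add: gimp_def lin_min lin_add lin_diff)

lemma const_hom: "0 \<le> (u::elt) \<Longrightarrow> gmult u u u = u \<and> gimp u u u = u"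
  by (simp add: gmult_def gimp_def)

definition Dj :: "nat \<Rightarrow> nat \<Rightarrow> tm" where
  "Dj N j = Op N (pw (Ng N Var) j) (Mul Var (sm N Var (j - 2)))"
definition Qj :: "nat \<Rightarrow> nat \<Rightarrow> tm" where
  "Qj N j = Mn Var (pw (Ng N Var) (j - 1))"

context
  fixes u x :: elt and N :: nat
  assumes u0: "0 \<le> u" and x0: "0 \<le> x" and xu: "x \<le> u" and z0: "ev u x (Zt N) = 0"
begin

lemma ev_pwNg: "ev u x (pw (Ng N Var) n) = max (u - nmul n x) 0"
proof -
  have e: "ev u x (Ng N Var) = u - x" using ev_Ng[OF u0 x0 xu z0] by simp
  have "0 \<le> u - x" "u - x \<le> u" using x0 xu by simp_all
  then show ?thesis using ev_pw[OF u0, of x "Ng N Var" n] e by simp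
qed

lemma ev_Dj: "2 \<le> j \<Longrightarrow> ev u x (Dj N j) =
   min (max (u - nmul j x) 0 + gmult u x (min (nmul (j - 1) x) u)) u"
  unfolding Dj_def using ev_Op[OF u0 x0 xu z0] ev_sm[OF u0 x0 xu z0] ev_pwNg
  by (simp add: Suc_diff_Suc numeral_2_eq_2)

lemma ev_Qj: "ev u x (Qj N j) = min x (max (u - nmul (j - 1) x) 0)"
  unfolding Qj_def using ev_Mn[OF u0 x0 xu z0] ev_pwNg by simp

lemma D_kill:
  assumes j: "2 \<le> j" and fu: "1 \<le> fst u" and ne: "int j * fst x \<noteq> fst u"
  shows "1 \<le> fst (ev u x (Dj N j))"
proof -
  define W where "W = max (u - nmul j x) 0"
  define V where "V = gmult u x (min (nmul (j - 1) x) u)"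
  have W0: "0 \<le> W" by (simp add: W_def)
  have V0: "0 \<le> V" by (simp add: V_def gmult_def)
  have key: "1 \<le> fst (W + V)"
  proof (cases "int j * fst x < fst u")
    case True
    then have "fst 0 < fst (u - nmul j x)" by simp
    then have "0 < u - nmul j x" by (rule fst_lt_imp_lt)
    then have "W = u - nmul j x" by (simp add: W_def)
    then have "1 \<le> fst W" using True by simp
    then show ?thesis using fst_nonneg[OF V0] by simp
  next
    case False
    then have gt: "fst u < int j * fst x" using ne by simp
    have "1 \<le> fst V"
    proof (cases "nmul (j - 1) x \<le> u")
      case True
      have nm: "x + nmul (j - 1) x = nmul j x" using j nmul_Suc[of "j - 1" x] by simp
      have "fst 0 < fst (nmul j x - u)" using gt by simp
      then have "0 < nmul j x - u" by (rule fst_lt_imp_lt)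
      then have "V = nmul j x - u" using True nm by (simp add: V_def gmult_def)
      then show ?thesis using gt by simp
    next
      case False
      then have "V = x" using x0 by (simp add: V_def gmult_def)
      have "fst u \<le> int (j - 1) * fst x" using False by (auto simp: lex_le)
      then have "1 \<le> fst x" using fu j
        by (smt (verit) mult_nonneg_nonpos of_nat_0_le_iff)
      then show ?thesis using \<open>V = x\<close> by simp
    qed
    then show ?thesis using fst_nonneg[OF W0] by simp
  qed
  have "ev u x (Dj N j) = min (W + V) u" using ev_Dj[OF j] by (simp add: W_def V_def)
  then show ?thesis using key fu by (simp add: min_def)
qed

end

lemma cand_pos:
  assumes k: "2 \<le> k" and c: "cand (int k, int h) (r, s)"
  shows "1 \<le> r" "r < int k" "1 \<le> int k - r"
proof -
  have r0: "0 \<le> r" and rk: "2 * r \<le> int k" and d: "r * int h - s * int k = 1 \<or> r * int h - s * int k = -1"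
    using c by (auto simp: cand_def lex_le det_def)
  have "r \<noteq> 0"
  proof
    assume "r = 0"
    then have "1 = int k * (-s) \<or> 1 = int k * s" using d by (auto simp: algebra_simps)
    then have "int k dvd 1" by (metis dvdI)
    then show False using k by simp
  qed
  then show "1 \<le> r" using r0 by simp
  then show "r < int k" "1 \<le> int k - r" using rk by linarith+
qed

lemma unit_pos: "1 \<le> (r::int) \<Longrightarrow> r * m = 1 \<or> r * m = -1 \<Longrightarrow> r = 1 \<and> (m = 1 \<or> m = -1)"
proof -
  assume r: "1 \<le> r" and d: "r * m = 1 \<or> r * m = -1"
  show ?thesis
  proof (cases "r * m = 1")
    case True then show ?thesis using r pos_zmult_eq_1_iff[of r m] by simp
  next
    case False
    then have "r * (-m) = 1" using d by simp
    then show ?thesis using r pos_zmult_eq_1_iff[of r "-m"] by simp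
  qed
qed

lemma A_special:
  assumes j: "2 \<le> j" and k: "2 \<le> k" and hk: "h < k" and c: "cand (int k, int h) (r, s)"
    and e: "int j * r = int k"
  shows "k = j \<and> (h = 1 \<or> h = j - 1)"
proof -
  have d: "r * int h - s * int k = 1 \<or> r * int h - s * int k = -1"
    using c by (auto simp: cand_def det_def)
  have r1: "1 \<le> r" using cand_pos[OF k c] by simp
  have "r * (int h - s * int j) = 1 \<or> r * (int h - s * int j) = -1"
    using d e by (simp add: algebra_simps flip: e)
  then have "r = 1 \<and> (int h - s * int j = 1 \<or> int h - s * int j = -1)"
    using unit_pos[OF r1] by blast
  then have r: "r = 1" and hs: "int h - s * int j = 1 \<or> int h - s * int j = -1" by auto
  have kj: "k = j" using e r by simp
  have "s = 0 \<or> s = 1"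
  proof -
    have "s \<le> -1 \<Longrightarrow> s * int j \<le> - int j" using mult_right_mono[of s "-1" "int j"] by simp
    moreover have "2 \<le> s \<Longrightarrow> 2 * int j \<le> s * int j" using mult_right_mono[of 2 s "int j"] by simp
    ultimately show ?thesis using hs hk kj j by linarith
  qed
  then have "h = 1 \<or> h = j - 1" using hs hk kj j by auto
  then show ?thesis using kj by simp
qed

lemma B_special:
  assumes j: "2 \<le> j" and k: "2 \<le> k" and hk: "h < k" and cop: "coprime k h"
    and c: "cand (int k, int h) (r, s)" and e: "int j * (int k - r) = int k"
  shows "k = 2 \<and> j = 2 \<and> h = 1"
proof -
  have d: "r * int h - s * int k = 1 \<or> r * int h - s * int k = -1"
    using c by (auto simp: cand_def det_def)
  have rk: "2 * r \<le> int k" using c by (auto simp: cand_def lex_le)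
  have p: "1 \<le> int k - r" using cand_pos[OF k c] by simp
  define m where "m = int k - r"
  have "(int k - r) * int h - (int h - s) * int k = -(r * int h - s * int k)" by (simp add: algebra_simps)
  moreover have "(int k - r) * int h - (int h - s) * int k = m * int h - (int h - s) * (int j * m)"
    using e by (simp add: m_def)
  moreover have "m * int h - (int h - s) * (int j * m) = m * (int h - (int h - s) * int j)"
    by (simp add: algebra_simps)
  ultimately have "m * (int h - (int h - s) * int j) = 1 \<or> m * (int h - (int h - s) * int j) = -1"
    using d by linarith
  then have "m = 1" using unit_pos[of m] p m_def by blast
  then have "int k - r = 1" by (simp add: m_def)
  then have "int k = int j" using e by simp
  then have kj: "k = j" by simp
  then have "j = 2" using rk \<open>int k - r = 1\<close> j by linarith
  moreover have "h \<noteq> 0"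
  proof
    assume "h = 0"
    then have "k = 1" using cop by simp
    then show False using k by simp
  qed
  ultimately show ?thesis using kj hk by auto
qed

lemma C_special:
  fixes k h j :: nat
  assumes cop: "coprime k h" and e: "j * h = k"
  shows "h = 1 \<and> k = j"
proof -
  have "h dvd k" using e by (metis dvd_triv_right)
  then have "h dvd gcd k h" by simp
  then have "h = 1" using cop by (simp add: coprime_iff_gcd_eq_1)
  then show ?thesis using e by simp
qed

lemma cand_eq:
  assumes k: "2 \<le> k" and cop: "coprime k h" and c: "cand (int k, int h) a"
  shows "gen_el k h = a"
  using cand_unique[OF k cop gen_el_cand[OF k cop] c] .

lemma Delta_cases:
  assumes "d \<in> Delta I J"
  obtains k h i where "d = (k,h,i)" "h < k" "coprime k h"
    "(i = 2 \<and> k \<in> divisors_of I) \<or> ((i = 0 \<or> i = 1) \<and> k \<in> divisors_of J)"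
  using assms unfolding Delta_def by blast



lemma comp_bound:
  assumes fin: "finite I" "finite J" and z: "0 \<notin> I" "0 \<notin> J"
    and k: "k \<in> divisors_of I \<or> k \<in> divisors_of J"
  shows "1 \<le> k \<and> k \<le> Max (I \<union> J)"
proof -
  obtain m where m: "m \<in> I \<union> J" "k dvd m" using k by (auto simp: divisors_of_def)
  have m0: "m \<noteq> 0"
  proof
    assume "m = 0"
    then have "0 \<in> I \<union> J" using m(1) by simp
    then show False using z by blast
  qed
  have "k \<le> m" using m m0 by (simp add: dvd_imp_le)
  moreover have "m \<le> Max (I \<union> J)" using m fin by simp
  moreover have "k \<noteq> 0" using m m0 by auto
  ultimately show ?thesis by simp
qed

lemma HV:
  assumes x: "0 \<le> x" "x \<le> u" and fu: "1 \<le> fst u" "fst u < int N" and fx: "1 \<le> fst (u - x)"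
    and j: "2 \<le> j"
    and D: "fst (min (max (u - nmul j x) 0 + gmult u x (min (nmul (j - 1) x) u)) u) = 0"
    and Q: "min x (max (u - nmul (j - 1) x) 0) = q"
  shows "ev u x (bt N (Dj N j) (Qj N j)) = q"
proof -
  have u0: "0 \<le> u" using x by simp
  have z0: "ev u x (Zt N) = 0" by (rule ev_Zt_zero[OF u0 x fu(2) fx])
  have N2: "2 \<le> N" using fu by linarith
  have "fst (ev u x (Dj N j)) = 0" using ev_Dj[OF u0 x z0 j] D by simp
  then have "ev u x (bt N (Dj N j) (Qj N j)) = ev u x (Qj N j)" by (rule G_inf[OF u0 x z0 fu(1) N2])
  then show ?thesis using ev_Qj[OF u0 x z0] Q by simp
qed

lemma HK:
  assumes x: "0 \<le> x" "x \<le> u" and fu: "1 \<le> fst u" "fst u < int N" and fx: "1 \<le> fst (u - x)"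
    and j: "2 \<le> j" and ne: "int j * fst x \<noteq> fst u"
  shows "ev u x (bt N (Dj N j) Q) = u"
proof -
  have u0: "0 \<le> u" using x by simp
  have z0: "ev u x (Zt N) = 0" by (rule ev_Zt_zero[OF u0 x fu(2) fx])
  have "1 \<le> fst (ev u x (Dj N j))" by (rule D_kill[OF u0 x z0 j fu(1) ne])
  then show ?thesis by (rule G_big[OF u0 x z0 fu])
qed


lemma sp1: "2 \<le> j \<Longrightarrow> int j < int N \<Longrightarrow> ev (int j, 1) (1,0) (bt N (Dj N j) (Qj N j)) = (1,0)"
  by (rule HV) (auto simp: nmul_def lex_le gmult_def max_def min_def of_nat_diff)

lemma sp2: "3 \<le> j \<Longrightarrow> int j < int N \<Longrightarrow> ev (int j, int (j - 1)) (1,1) (bt N (Dj N j) (Qj N j)) = (1,0)"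
  by (rule HV) (auto simp: nmul_def lex_le gmult_def max_def min_def of_nat_diff)

lemma sp3: "2 \<le> j \<Longrightarrow> int j < int N \<Longrightarrow> ev (int j, 0) (1,0) (bt N (Dj N j) (Qj N j)) = (1,0)"
  by (rule HV) (auto simp: nmul_def lex_le gmult_def max_def min_def of_nat_diff)

lemma sp4: "2 < N \<Longrightarrow> ev (2, 1) (1,1) (bt N (Dj N 2) (Qj N 2)) = (1,0)"
  by (rule HV) (auto simp: nmul_def lex_le gmult_def max_def min_def)


lemma gbar_simps:
  "gbar (k, h, 0) = gen_el k h"
  "gbar (k, h, Suc 0) = lneg k h (gen_el k h)"
  "gbar (k, h, 2) = (int h, 0)"
  by (simp_all add: gbar_def)

lemma ucomp_simps:
  "ucomp (k, h, 0) = (int k, int h)"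
  "ucomp (k, h, Suc 0) = (int k, int h)"
  "ucomp (k, h, 2) = (int k, 0)"
  by (simp_all add: ucomp_def)

lemma gen_el_1: "gen_el 1 h = (0,1)" "gen_el (Suc 0) h = (0,1)" by (simp_all add: gen_el_def)

lemma main_ge2:
  assumes fin: "finite I" "finite J" and z: "0 \<notin> I" "0 \<notin> J"
    and red: "reduced I J" and jJ: "j \<in> J" and j2: "2 \<le> j"
  shows "embeddable_into (Luk_pair j 1) (A_Delta I J) (B_Delta I J)"
proof -
  define K where "K = Max (I \<union> J)"
  define N where "N = K + 2"
  define SP :: "(nat \<times> nat \<times> nat) set" where "SP = {(j,1,0), (j,j-1,0), (j,1,2)} \<union> (if j = 2 then {(2,1,1)} else {})"
  define cc where "cc d = (case d of (k,h,i) \<Rightarrow> if i = 2 then 0 else int h)" for d :: "nat \<times> nat \<times> nat"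
  define psi where "psi d x = (if d \<in> SP then lin (cc d) 0 x else ucomp d)" for d x
  define t where "t = bt N (Dj N j) (Qj N j)"
  have jdJ: "j \<in> divisors_of J" unfolding divisors_of_def using jJ dvd_refl by blast
  have jK: "j \<le> K" using comp_bound[OF fin z] jdJ by (simp add: K_def)
  have bnd: "1 \<le> k \<and> k \<le> K" if "(k,h,i) \<in> Delta I J" for k h i
  proof -
    from that obtain k' h' i' where "(k,h,i) = (k',h',i')" "(i' = 2 \<and> k' \<in> divisors_of I) \<or> ((i' = 0 \<or> i' = 1) \<and> k' \<in> divisors_of J)"
      by (rule Delta_cases)
    then show ?thesis using comp_bound[OF fin z] by (auto simp: K_def)
  qed
  have cc0: "0 \<le> cc d" for d by (simp add: cc_def split: prod.splits)
  have SPu: "lin (cc d) 0 (int j, 1) = ucomp d" if "d \<in> SP" for d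
    using that j2 by (auto simp: SP_def cc_def lin_def ucomp_def of_nat_diff split: if_splits)
  have d0: "(j,1,0) \<in> Delta I J" using jdJ j2 by (auto simp: Delta_def)
  have d0SP: "(j,1,0) \<in> SP" by (simp add: SP_def)
  have cand_g: "cand (int j, 1) (1,0)" using j2 by (simp add: cand_def lex_le det_def) arith
  have u10: "(1,0) \<le> (int j, 1::int)" using j2 by (simp add: lex_le)
  show ?thesis
  proof (rule criterion[where psi = psi and u = "(int j, 1)" and g = "(1,0)" and t = t])
    show "Luk_pair j 1 = ualg (int j, 1)" by (simp add: Luk_pair_ualg)
    show "0 \<le> (1::int,0::int)" by (simp add: lex_le)
    show "(1,0) \<le> (int j, 1::int)" by (rule u10)
    show "hcarrier (Luk_pair j 1) \<subseteq> gen (Luk_pair j 1) {(1, 0)}"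
      using cand_gen(1)[OF u10 cand_g] by (simp add: Luk_pair_ualg ualg_def)
    show "(j,1,0) \<in> Delta I J" by (rule d0)
    show "inj_on (psi (j,1,0)) (hcarrier (Luk_pair j 1))"
      using d0SP by (simp add: psi_def cc_def lin_def inj_on_def prod_eq_iff)
    show "psi d (gmult (int j, 1) a b) = gmult (ucomp d) (psi d a) (psi d b) \<and>
          psi d (gimp (int j, 1) a b) = gimp (ucomp d) (psi d a) (psi d b)"
      if "d \<in> Delta I J" for d a b
    proof (cases "d \<in> SP")
      case True
      then show ?thesis using lin_gmult[OF cc0] lin_gimp[OF cc0] SPu[OF True] by (simp add: psi_def)
    next
      case False
      have "0 \<le> ucomp d" by (cases d) (auto simp: ucomp_def lex_le)
      then show ?thesis using False const_hom by (simp add: psi_def)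
    qed
    show "psi d (int j, 1) = ucomp d" if "d \<in> Delta I J" for d
      using SPu by (simp add: psi_def)
    show "psi d (1,0) = ev (ucomp d) (gbar d) t" if dD: "d \<in> Delta I J" for d
    proof -
      obtain k h i where d: "d = (k,h,i)" and hk: "h < k" and cop: "coprime k h"
        and ki: "(i = 2 \<and> k \<in> divisors_of I) \<or> ((i = 0 \<or> i = 1) \<and> k \<in> divisors_of J)"
        using dD by (rule Delta_cases)
      have kb: "1 \<le> k" "k \<le> K" using bnd dD d by blast+
      have kN: "int k < int N" using kb by (simp add: N_def)
      have jN: "int j < int N" using jK by (simp add: N_def)
      show ?thesis
      proof (cases "d \<in> SP")
        case True
        have lhs: "psi d (1,0) = (1,0)" using True by (simp add: psi_def lin_def)
        have "ev (ucomp d) (gbar d) t = (1,0)"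
        proof -
          consider "d = (j,1,0)" | "d = (j,j-1,0)" "3 \<le> j" | "d = (j,1,2)" | "j = 2" "d = (2,1,1)"
            using True j2 unfolding SP_def by (auto split: if_splits)
          then show ?thesis
          proof cases
            case 1
            have "gen_el j 1 = (1,0)" using cand_eq[of j 1 "(1,0)"] j2 cand_g by simp
            then show ?thesis using 1 sp1[OF j2 jN] by (simp add: t_def gbar_simps ucomp_simps)
          next
            case 2
            have cop': "coprime j (j - 1)" by (rule coprime_diff_one_right_nat) (use j2 in simp)
            have "cand (int j, int (j - 1)) (1,1)" using 2 by (simp add: cand_def lex_le det_def of_nat_diff)
            then have "gen_el j (j - 1) = (1,1)" using cand_eq[of j "j - 1" "(1,1)"] j2 cop' by simp
            then show ?thesis using 2 sp2[OF _ jN] by (simp add: t_def gbar_simps ucomp_simps)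
          next
            case 3
            then show ?thesis using sp3[OF j2 jN] by (simp add: t_def gbar_simps ucomp_simps)
          next
            case 4
            have "cand (2, 1) (1,0)" by (simp add: cand_def lex_le det_def)
            then have "gen_el 2 1 = (1,0)" using cand_eq[of 2 1 "(1,0)"] by simp
            then have "gbar d = (1,1)" using 4 by (simp add: gbar_simps lneg_eq gimp_def min_def lex_le)
            then show ?thesis using 4 sp4 jN by (simp add: t_def ucomp_simps)
          qed
        qed
        then show ?thesis using lhs by simp
      next
        case False
        have lhs: "psi d (1,0) = ucomp d" using False by (simp add: psi_def)
        have "ev (ucomp d) (gbar d) t = ucomp d"
        proof -
          consider "i = 2" | "i = 0" "k = 1" | "i = 1" "k = 1" | "i = 0" "2 \<le> k" | "i = 1" "2 \<le> k"
            using ki kb by linarith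
          then show ?thesis
          proof cases
            case 1
            have ne: "int j * int h \<noteq> int k"
            proof
              assume "int j * int h = int k"
              then have "j * h = k" by (metis of_nat_eq_iff of_nat_mult)
              then have "h = 1 \<and> k = j" using C_special[OF cop] by blast
              then show False using False d 1 by (simp add: SP_def)
            qed
            have "ev (int k, 0) (int h, 0) (bt N (Dj N j) (Qj N j)) = (int k, 0)"
              by (rule HK) (use hk kb ne kN j2 in \<open>auto simp: lex_le\<close>)
            then show ?thesis using d 1 by (simp add: t_def gbar_simps ucomp_simps)
          next
            case 2
            then have "h = 0" using hk by simp
            have "ev (1, 0) (0, 1) (bt N (Dj N j) (Qj N j)) = (1, 0)"
              by (rule HK) (use kN 2 j2 in \<open>auto simp: lex_le\<close>)
            then show ?thesis using d 2 \<open>h = 0\<close> by (simp add: t_def gbar_simps ucomp_simps gen_el_1)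
          next
            case 3
            then have "h = 0" using hk by simp
            have "gbar d = (1,-1)" using d 3 \<open>h = 0\<close>
              by (simp add: gbar_simps gen_el_1 lneg_eq gimp_def min_def lex_le)
            then show ?thesis using d 3 G_101 \<open>h = 0\<close> by (simp add: t_def ucomp_simps)
          next
            case 4
            have c: "cand (int k, int h) (gen_el k h)" by (rule gen_el_cand[OF 4(2) cop])
            obtain r s where rs: "gen_el k h = (r,s)" by (cases "gen_el k h")
            have u10k: "(1,0) \<le> (int k, int h)" using 4 by (simp add: lex_le)
            note cg = cand_gen[OF u10k c]
            have pos: "1 \<le> int k - r" using cand_pos[OF 4(2)] c rs by simp
            have ne: "int j * r \<noteq> int k"
            proof
              assume e: "int j * r = int k"
              have "cand (int k, int h) (r, s)" using c rs by simp
              then have "k = j \<and> (h = 1 \<or> h = j - 1)" using A_special[OF j2 4(2) hk _ e] by blast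
              then show False using False d 4 by (auto simp: SP_def)
            qed
            have "ev (int k, int h) (r, s) (bt N (Dj N j) (Qj N j)) = (int k, int h)"
              by (rule HK) (use cg rs pos ne kb kN j2 in auto)
            then show ?thesis using d 4 rs by (simp add: t_def gbar_simps ucomp_simps)
          next
            case 5
            have c: "cand (int k, int h) (gen_el k h)" by (rule gen_el_cand[OF 5(2) cop])
            obtain r s where rs: "gen_el k h = (r,s)" by (cases "gen_el k h")
            have u10k: "(1,0) \<le> (int k, int h)" using 5 by (simp add: lex_le)
            note cg = cand_gen[OF u10k c]
            have pos: "1 \<le> r" using cand_pos[OF 5(2)] c rs by simp
            have gb: "gbar d = (int k, int h) - (r, s)"
              using d 5 rs cg(2) by (simp add: gbar_simps lneg_eq gimp_zero)
            have ne: "int j * (int k - r) \<noteq> int k"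
            proof
              assume e: "int j * (int k - r) = int k"
              have "cand (int k, int h) (r, s)" using c rs by simp
              then have "k = 2 \<and> j = 2 \<and> h = 1" using B_special[OF j2 5(2) hk cop _ e] by blast
              then show False using False d 5 by (auto simp: SP_def)
            qed
            have x0: "0 \<le> (int k, int h) - gen_el k h" "(int k, int h) - gen_el k h \<le> (int k, int h)"
              using cg(2,3) by simp_all
            have "ev (int k, int h) ((int k, int h) - gen_el k h) (bt N (Dj N j) (Qj N j)) = (int k, int h)"
              by (rule HK) (use x0 pos ne kb kN j2 rs in auto)
            moreover have "(int k, int h) - gen_el k h = (int k, int h) - (r, s)" using rs by simp
            ultimately have "ev (int k, int h) ((int k, int h) - (r, s)) (bt N (Dj N j) (Qj N j)) = (int k, int h)"
              by simp
            then show ?thesis using d 5 gb by (simp add: t_def ucomp_simps)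
          qed
        qed
        then show ?thesis using lhs by simp
      qed
    qed
  qed
qed


lemma main_1:
  assumes fin: "finite I" "finite J" and z: "0 \<notin> I" "0 \<notin> J"
    and red: "reduced I J" and jJ: "1 \<in> J"
  shows "embeddable_into (Luk_pair 1 1) (A_Delta I J) (B_Delta I J)"
proof -
  define K where "K = Max (I \<union> J)"
  define N where "N = K + 2"
  define psi where "psi d x = (if d = (1,0,0) then lin 1 (-1) x else if d = (1,0,2) then lin 0 0 x else ucomp d)"
    for d :: "nat \<times> nat \<times> nat" and x
  define t where "t = bt N Var Var"
  have Jd: "k = 1" if "k \<in> divisors_of J" for k
  proof -
    from that obtain n where n: "n \<in> J" "k dvd n" unfolding divisors_of_def by blast
    have "n = 1"
    proof (rule ccontr)
      assume "n \<noteq> 1"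
      then have "n \<in> J - {1}" using n by simp
      moreover have "\<forall>n\<in>J. \<forall>x\<in>J - {n}. \<not> n dvd x" using red by (simp add: reduced_def)
      ultimately have "\<not> 1 dvd n" using jJ by blast
      then show False by simp
    qed
    then show ?thesis using n by simp
  qed
  have bnd: "1 \<le> k \<and> k \<le> K" if "(k,h,i) \<in> Delta I J" for k h i
  proof -
    from that obtain k' h' i' where "(k,h,i) = (k',h',i')" "(i' = 2 \<and> k' \<in> divisors_of I) \<or> ((i' = 0 \<or> i' = 1) \<and> k' \<in> divisors_of J)"
      by (rule Delta_cases)
    then show ?thesis using comp_bound[OF fin z] by (auto simp: K_def)
  qed
  have cand_g: "cand (1, 1) (0,1)" by (simp add: cand_def lex_le det_def)
  have u10: "(1,0) \<le> (1::int, 1::int)" by (simp add: lex_le)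
  have d0: "(1,0,0) \<in> Delta I J"
  proof -
    have "1 \<in> divisors_of J" unfolding divisors_of_def using jJ by auto
    moreover have "coprime (1::nat) 0" by simp
    ultimately have "(1::nat,0::nat,0::nat) \<in> {(k, h, i) |k h i. i \<in> {0, 1} \<and> h < k \<and> k \<in> divisors_of J \<and> coprime k h}"
      by simp
    then show ?thesis unfolding Delta_def by (rule UnI2)
  qed
  have psiu: "psi d (1,1) = ucomp d" for d
  proof -
    obtain k h i where "d = (k,h,i)" by (cases d)
    then show ?thesis by (auto simp: psi_def lin_def ucomp_def)
  qed
  show ?thesis
  proof (rule criterion[where psi = psi and u = "(1, 1)" and g = "(0,1)" and t = t])
    show "Luk_pair 1 1 = ualg (1, 1)" by (simp add: Luk_pair_ualg)
    show "0 \<le> (0::int,1::int)" by (simp add: lex_le)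
    show "(0,1) \<le> (1::int, 1::int)" by (simp add: lex_le)
    show "hcarrier (Luk_pair 1 1) \<subseteq> gen (Luk_pair 1 1) {(0, 1)}"
      using cand_gen(1)[OF u10 cand_g] by (simp add: Luk_pair_ualg ualg_def)
    show "(1,0,0) \<in> Delta I J" by (rule d0)
    show "inj_on (psi (1,0,0)) (hcarrier (Luk_pair 1 1))"
      by (simp add: psi_def lin_def inj_on_def prod_eq_iff)
    show "psi d (gmult (1, 1) a b) = gmult (ucomp d) (psi d a) (psi d b) \<and>
          psi d (gimp (1, 1) a b) = gimp (ucomp d) (psi d a) (psi d b)"
      if "d \<in> Delta I J" for d a b
    proof -
      have c: "psi d (1,1) = ucomp d" by (rule psiu)
      consider "d = (1,0,0)" | "d = (1,0,2)" | "d \<noteq> (1,0,0)" "d \<noteq> (1,0,2)" by blast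
      then show ?thesis
      proof cases
        case 1
        then show ?thesis using lin_gmult[of 1 "-1"] lin_gimp[of 1 "-1"] c by (simp add: psi_def)
      next
        case 2
        then show ?thesis using lin_gmult[of 0 0] lin_gimp[of 0 0] c by (simp add: psi_def)
      next
        case 3
        have "0 \<le> ucomp d" by (cases d) (auto simp: ucomp_def lex_le)
        then show ?thesis using 3 const_hom by (simp add: psi_def)
      qed
    qed
    show "psi d (1,1) = ucomp d" if "d \<in> Delta I J" for d by (rule psiu)
    show "psi d (0,1) = ev (ucomp d) (gbar d) t" if dD: "d \<in> Delta I J" for d
    proof -
      obtain k h i where d: "d = (k,h,i)" and hk: "h < k" and cop: "coprime k h"
        and ki: "(i = 2 \<and> k \<in> divisors_of I) \<or> ((i = 0 \<or> i = 1) \<and> k \<in> divisors_of J)"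
        using dD by (rule Delta_cases)
      have kb: "1 \<le> k" "k \<le> K" using bnd dD d by blast+
      have kN: "int k < int N" using kb by (simp add: N_def)
      have N2: "2 \<le> N" by (simp add: N_def)
      consider "i = 0" | "i = 1" | "i = 2" "h = 0" | "i = 2" "1 \<le> h" using ki by linarith
      then show ?thesis
      proof cases
        case 1
        then have "k = 1" "h = 0" using ki Jd hk by auto
        then have dd: "d = (1,0,0)" using d 1 by simp
        have x: "0 \<le> (0::int,1::int)" "(0::int,1::int) \<le> (1,0)" by (simp_all add: lex_le)
        have z0: "ev (1,0) (0,1) (Zt N) = 0"
          by (rule ev_Zt_zero) (use kN \<open>k = 1\<close> in \<open>simp_all add: lex_le\<close>)
        have "ev (1,0) (0,1) t = ev (1,0) (0,1) Var" unfolding t_def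
          by (rule G_inf[OF _ x z0 _ N2]) (simp_all add: lex_le)
        then show ?thesis using dd by (simp add: psi_def lin_def gbar_simps ucomp_simps gen_el_1)
      next
        case 2
        then have "k = 1" "h = 0" using ki Jd hk by auto
        then have dd: "d = (1,0,1)" using d 2 by simp
        have "gbar d = (1,-1)" using dd
          by (simp add: gbar_simps gen_el_1 lneg_eq gimp_def min_def lex_le)
        then show ?thesis using dd G_101 by (simp add: psi_def t_def ucomp_simps)
      next
        case 3
        then have "k = 1" using cop by simp
        then have dd: "d = (1,0,2)" using d 3 by simp
        have x: "0 \<le> (0::int,0::int)" "(0::int,0::int) \<le> (1,0)" by (simp_all add: lex_le)
        have z0: "ev (1,0) (0,0) (Zt N) = 0"
          by (rule ev_Zt_zero) (use kN \<open>k = 1\<close> in \<open>simp_all add: lex_le\<close>)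
        have "ev (1,0) (0,0) t = ev (1,0) (0,0) Var" unfolding t_def
          by (rule G_inf[OF _ x z0 _ N2]) (simp_all add: lex_le)
        then show ?thesis using dd by (simp add: psi_def lin_def gbar_simps ucomp_simps)
      next
        case 4
        then have dn: "d \<noteq> (1,0,0)" "d \<noteq> (1,0,2)" using d by auto
        have x: "0 \<le> (int h, 0::int)" "(int h, 0::int) \<le> (int k, 0)" using hk by (simp_all add: lex_le, linarith)
        have z0: "ev (int k, 0) (int h, 0) (Zt N) = 0"
          by (rule ev_Zt_zero) (use kN hk in \<open>auto simp: lex_le\<close>)
        have "ev (int k, 0) (int h, 0) t = (int k, 0)" unfolding t_def
          by (rule G_big[OF _ x z0]) (use kb kN 4 in \<open>simp_all add: lex_le\<close>)
        then show ?thesis using dn d 4 by (simp add: psi_def gbar_simps ucomp_simps)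
      qed
    qed
  qed
qed

theorem lemma4p10:
  fixes I J :: "nat set" and j :: nat
  assumes "finite I" and "finite J" and "0 \<notin> I" and "0 \<notin> J"
    and "reduced I J"
    and "j \<in> J"
  shows "embeddable_into (Luk_pair j 1) (A_Delta I J) (B_Delta I J)"
proof (cases "j = 1")
  case True
  then show ?thesis using main_1[OF assms(1-5)] assms(6) by simp
next
  case False
  then have "2 \<le> j" using assms(4,6) by (cases j) auto
  then show ?thesis using main_ge2[OF assms] by simp
qed


end
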